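(* Let $a,b,c,d$ be real numbers such that the integral converges and the expressions below are defined. Then \[ \int_0^1\!\!\int_0^1\frac{(xy)^b\left[(xy)^{d-1}-x^{a-1}y^{c-1}\right]}{-\left[1-(xy)^b\right]\log(xy)}\,dx\,dy=\sum_{n=1}^\infty\left(\frac{1}{bn+d}-\frac{\log\left(1+\frac{c-a}{bn+a}\right)}{c-a}\right)=\frac{\log\left(\frac{\Gamma\left(\frac{b+c}{b}\right)}{\Gamma\left(\frac{a+b}{b}\right)}\right)}{c-a}-\frac{\psi\left(\frac{b+d}{b}\right)}{b}, \] where $\Gamma$ is Euler's gamma function and $\psi=\Gamma'/\Gamma$ is the digamma function. *)

theory Defs
  imports "HOL-Analysis.Analysis"
begin

definition integrand36 :: "real \<Rightarrow> real \<Rightarrow> real \<Rightarrow> real \<Rightarrow> real \<times> real \<Rightarrow> real" where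
  "integrand36 a b c d = (\<lambda>(x, y). (x*y) powr b * ((x*y) powr (d-1) - x powr (a-1) * y powr (c-1))
              / (- (1 - (x*y) powr b) * ln (x*y)))"

end

theory Submission
  imports Defs "HOL-Real_Asymp.Real_Asymp"
begin


lemma int_exp_lnt:
  fixes t :: real assumes t0: "0 < t" and t1: "t < 1"
  shows "(\<integral>\<^sup>+z. ennreal (t powr z) * indicator {0..} z \<partial>lborel) = ennreal (- 1 / ln t)"
proof -
  have l: "ln t < 0" using t0 t1 by simp
  have eq: "t powr z = exp (z * ln t)" for z using t0 by (simp add: powr_def mult.commute)
  have "(\<integral>\<^sup>+z. ennreal (exp (z * ln t)) * indicator {0..} z \<partial>lborel) = 0 - exp (0 * ln t) / ln t"
  proof (rule nn_integral_FTC_atLeast)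
    show "(\<lambda>z. exp (z * ln t)) \<in> borel_measurable borel" by measurable
    fix x :: real
    show "((\<lambda>z. exp (z * ln t) / ln t) has_real_derivative exp (x * ln t)) (at x)"
      using l by (auto intro!: derivative_eq_intros)
    show "0 \<le> exp (x * ln t)" by simp
  next
    show "((\<lambda>z. exp (z * ln t) / ln t) \<longlongrightarrow> 0) at_top"
      using l by real_asymp
  qed
  then show ?thesis unfolding eq by simp
qed

lemma int_powr01:
  fixes s :: real assumes s: "s > 0"
  shows "(\<integral>\<^sup>+x. ennreal (x powr (s - 1)) * indicator {0<..1} x \<partial>lborel) = ennreal (1 / s)"
proof -
  have "(\<integral>\<^sup>+x. ennreal (x powr (s - 1)) * indicator {0..1} x \<partial>lborel) = ennreal (1 / s)"
    using nn_integral_has_integral_lebesgue'[OF _ has_integral_powr_from_0[of "s - 1" 1]] s by simp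
  moreover have "ennreal (x powr (s - 1)) * indicator {0..1} x = ennreal (x powr (s - 1)) * indicator {0<..1} x" for x :: real
    by (cases "x = 0") (auto simp: indicator_def)
  ultimately show ?thesis by simp
qed

definition Kf :: "real \<Rightarrow> real \<Rightarrow> real" where
  "Kf p q = (if p = q then 1 / p else ln (q / p) / (q - p))"

lemma Kf_nonneg: "p > 0 \<Longrightarrow> q > 0 \<Longrightarrow> Kf p q \<ge> 0"
  unfolding Kf_def
  by (cases "p < q") (auto simp: divide_nonneg_nonneg divide_nonpos_nonpos)

lemma int_rat:
  fixes p q :: real assumes p: "p > 0" and q: "q > 0"
  shows "(\<integral>\<^sup>+z. ennreal (1 / ((p + z) * (q + z))) * indicator {0..} z \<partial>lborel) = ennreal (Kf p q)"
proof (cases "p = q")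
  case True
  have "(\<integral>\<^sup>+z. ennreal (1 / ((p + z) * (q + z))) * indicator {0..} z \<partial>lborel) = 0 - (- 1 / (p + 0))"
  proof (rule nn_integral_FTC_atLeast)
    show "(\<lambda>z. 1 / ((p + z) * (q + z))) \<in> borel_measurable borel" by measurable
    fix x :: real assume x: "0 \<le> x"
    show "((\<lambda>z. - 1 / (p + z)) has_real_derivative 1 / ((p + x) * (q + x))) (at x)"
    proof -
      have px: "p + x \<noteq> 0" using x p by simp
      have "((\<lambda>z. - 1 / (p + z)) has_real_derivative (1 / ((p + x) * (p + x)))) (at x)"
        by (rule derivative_eq_intros refl | use px in simp)+
      then show ?thesis using True by simp
    qed
    show "0 \<le> 1 / ((p + x) * (q + x))" using x p q by simp
  next
    show "((\<lambda>z. - 1 / (p + z)) \<longlongrightarrow> 0) at_top" by real_asymp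
  qed
  then show ?thesis using True p by (simp add: Kf_def)
next
  case False
  have "(\<integral>\<^sup>+z. ennreal (1 / ((p + z) * (q + z))) * indicator {0..} z \<partial>lborel)
      = 0 - (ln (p + 0) - ln (q + 0)) / (q - p)"
  proof (rule nn_integral_FTC_atLeast)
    show "(\<lambda>z. 1 / ((p + z) * (q + z))) \<in> borel_measurable borel" by measurable
    fix x :: real assume x: "0 \<le> x"
    have "((\<lambda>z. (ln (p + z) - ln (q + z)) / (q - p)) has_real_derivative (1 / (p + x) - 1 / (q + x)) / (q - p)) (at x)"
      using x p q False by (auto intro!: derivative_eq_intros)
    moreover have "(1 / (p + x) - 1 / (q + x)) / (q - p) = 1 / ((p + x) * (q + x))"
    proof -
      have "p + x \<noteq> 0" "q + x \<noteq> 0" "q - p \<noteq> 0" using x p q False by auto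
      then show ?thesis by (simp add: divide_simps)
    qed
    ultimately show "((\<lambda>z. (ln (p + z) - ln (q + z)) / (q - p)) has_real_derivative 1 / ((p + x) * (q + x))) (at x)"
      by simp
    show "0 \<le> 1 / ((p + x) * (q + x))" using x p q by simp
  next
    have "((\<lambda>z. ln (p + z) - ln (q + z)) \<longlongrightarrow> 0) at_top" using p q by real_asymp
    then show "((\<lambda>z. (ln (p + z) - ln (q + z)) / (q - p)) \<longlongrightarrow> 0) at_top"
      by (rule tendsto_divide_zero)
  qed
  moreover have "0 - (ln (p + 0) - ln (q + 0)) / (q - p) = Kf p q"
    using p q False by (simp add: Kf_def ln_div field_simps)
  ultimately show ?thesis by simp
qed



definition J :: "real \<Rightarrow> real \<Rightarrow> real \<times> real \<Rightarrow> real" where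
  "J p q = (\<lambda>(x, y). indicator {0<..1} x * indicator {0<..1} y * (x powr (p - 1) * y powr (q - 1) / (- ln (x * y))))"

lemma J_meas[measurable]: "J p q \<in> borel_measurable lborel"
  unfolding J_def lborel_prod[symmetric] by measurable

lemma J_nonneg: "J p q w \<ge> 0"
proof -
  obtain x y where w: "w = (x, y)" by fastforce
  show ?thesis
  proof (cases "x \<in> {0<..1} \<and> y \<in> {0<..1}")
    case True
    then have "x * y \<le> 1" by (auto intro: mult_le_one)
    then have "ln (x * y) \<le> 0" using True by simp
    then show ?thesis using True unfolding J_def w by (auto intro!: divide_nonneg_nonpos)
  next
    case False
    then show ?thesis unfolding J_def w by (auto simp: indicator_def)
  qed
qed

lemma inner_y:
  fixes p q x :: real assumes p: "p > 0" and q: "q > 0"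
  shows "(\<integral>\<^sup>+y. ennreal (J p q (x, y)) \<partial>lborel)
       = (\<integral>\<^sup>+z. ennreal (x powr (p + z - 1) / (q + z)) * indicator {0<..1} x * indicator {0..} z \<partial>lborel)"
proof (cases "x \<in> {0<..1}")
  case False
  then have "J p q (x, y) = 0" for y by (simp add: J_def)
  then show ?thesis using False by simp
next
  case True
  then have x0: "x > 0" and x1: "x \<le> 1" by auto
  define h where "h = (\<lambda>y z. ennreal (x powr (p + z - 1) * y powr (q + z - 1)) * indicator {0<..1} y * indicator {0..} z)"
  have hm: "case_prod h \<in> borel_measurable (lborel \<Otimes>\<^sub>M lborel)" unfolding h_def by measurable
  have step1: "(\<integral>\<^sup>+y. ennreal (J p q (x, y)) \<partial>lborel) = (\<integral>\<^sup>+y. \<integral>\<^sup>+z. h y z \<partial>lborel \<partial>lborel)"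
  proof (rule nn_integral_cong_AE)
    show "AE y in lborel. ennreal (J p q (x, y)) = (\<integral>\<^sup>+z. h y z \<partial>lborel)"
      using AE_lborel_singleton[of "1::real"]
    proof eventually_elim
      fix y :: real assume y1: "y \<noteq> 1"
      show "ennreal (J p q (x, y)) = (\<integral>\<^sup>+z. h y z \<partial>lborel)"
      proof (cases "y \<in> {0<..1}")
        case False
        then have "J p q (x, y) = 0" "\<And>z. h y z = 0" by (simp_all add: J_def h_def)
        then show ?thesis by simp
      next
        case True
        then have y0: "y > 0" and y1': "y < 1" using y1 by auto
        have t0: "x * y > 0" using x0 y0 by simp
        have "x * y < x * 1" using x0 y1' by (intro mult_strict_left_mono) auto
        then have t1: "x * y < 1" using x1 by linarith
        define c where "c = x powr (p - 1) * y powr (q - 1)"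
        have c0: "c \<ge> 0" unfolding c_def by simp
        have hz: "h y z = ennreal c * (ennreal ((x * y) powr z) * indicator {0..} z)" for z
        proof -
          have "x powr (p + z - 1) * y powr (q + z - 1) = c * (x * y) powr z"
            unfolding c_def using x0 y0 by (simp add: powr_add powr_mult diff_add_eq[symmetric] add.commute)
          then show ?thesis unfolding h_def using True c0
            by (simp add: ennreal_mult mult.assoc)
        qed
        have "(\<integral>\<^sup>+z. h y z \<partial>lborel) = ennreal c * (\<integral>\<^sup>+z. ennreal ((x * y) powr z) * indicator {0..} z \<partial>lborel)"
          unfolding hz by (rule nn_integral_cmult) measurable
        also have "\<dots> = ennreal c * ennreal (- 1 / ln (x * y))"
          using int_exp_lnt[OF t0 t1] by simp
        also have "\<dots> = ennreal (c * (- 1 / ln (x * y)))"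
        proof -
          have neg: "0 \<le> - 1 / ln (x * y)" using t0 t1 by (simp add: divide_nonpos_neg)
          show ?thesis by (simp only: ennreal_mult[OF c0 neg, symmetric])
        qed
        also have "c * (- 1 / ln (x * y)) = J p q (x, y)"
          unfolding c_def J_def using True \<open>x \<in> {0<..1}\<close> by simp
        finally show ?thesis ..
      qed
    qed
  qed
  also have "\<dots> = (\<integral>\<^sup>+z. \<integral>\<^sup>+y. h y z \<partial>lborel \<partial>lborel)"
    using lborel_pair.Fubini'[OF hm] by simp
  also have "\<dots> = (\<integral>\<^sup>+z. ennreal (x powr (p + z - 1) / (q + z)) * indicator {0<..1} x * indicator {0..} z \<partial>lborel)"
  proof (rule nn_integral_cong)
    fix z :: real
    show "(\<integral>\<^sup>+y. h y z \<partial>lborel) = ennreal (x powr (p + z - 1) / (q + z)) * indicator {0<..1} x * indicator {0..} z"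
    proof (cases "z \<ge> 0")
      case False
      then show ?thesis by (simp add: h_def indicator_def)
    next
      case True
      have hy: "h y z = ennreal (x powr (p + z - 1)) * (ennreal (y powr (q + z - 1)) * indicator {0<..1} y)" for y
        unfolding h_def using True by (simp add: ennreal_mult mult.assoc)
      have "(\<integral>\<^sup>+y. h y z \<partial>lborel) = ennreal (x powr (p + z - 1)) * (\<integral>\<^sup>+y. ennreal (y powr (q + z - 1)) * indicator {0<..1} y \<partial>lborel)"
        unfolding hy by (rule nn_integral_cmult) measurable
      also have "\<dots> = ennreal (x powr (p + z - 1)) * ennreal (1 / (q + z))"
        using int_powr01[of "q + z"] q True by (simp add: diff_add_eq)
      also have "\<dots> = ennreal (x powr (p + z - 1) / (q + z))"
        using q True by (simp add: ennreal_mult[symmetric] divide_simps)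
      finally show ?thesis using True \<open>x \<in> {0<..1}\<close> by simp
    qed
  qed
  finally show ?thesis .
qed

lemma J_nn:
  fixes p q :: real assumes p: "p > 0" and q: "q > 0"
  shows "(\<integral>\<^sup>+w. ennreal (J p q w) \<partial>lborel) = ennreal (Kf p q)"
proof -
  define g where "g = (\<lambda>x z. ennreal (x powr (p + z - 1) / (q + z)) * indicator {0<..1} x * indicator {0..} z)"
  have gm: "case_prod g \<in> borel_measurable (lborel \<Otimes>\<^sub>M lborel)" unfolding g_def by measurable
  have "(\<integral>\<^sup>+w. ennreal (J p q w) \<partial>lborel) = (\<integral>\<^sup>+w. ennreal (J p q w) \<partial>(lborel \<Otimes>\<^sub>M lborel))"
    by (simp add: lborel_prod)
  also have "\<dots> = (\<integral>\<^sup>+x. \<integral>\<^sup>+y. ennreal (J p q (x, y)) \<partial>lborel \<partial>lborel)"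
    by (rule lborel.nn_integral_fst[symmetric]) (simp add: lborel_prod)
  also have "\<dots> = (\<integral>\<^sup>+x. \<integral>\<^sup>+z. g x z \<partial>lborel \<partial>lborel)"
    unfolding g_def by (simp add: inner_y[OF p q])
  also have "\<dots> = (\<integral>\<^sup>+z. \<integral>\<^sup>+x. g x z \<partial>lborel \<partial>lborel)"
    using lborel_pair.Fubini'[OF gm] by simp
  also have "\<dots> = (\<integral>\<^sup>+z. ennreal (1 / ((p + z) * (q + z))) * indicator {0..} z \<partial>lborel)"
  proof (rule nn_integral_cong)
    fix z :: real
    show "(\<integral>\<^sup>+x. g x z \<partial>lborel) = ennreal (1 / ((p + z) * (q + z))) * indicator {0..} z"
    proof (cases "z \<ge> 0")
      case False
      then show ?thesis by (simp add: g_def)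
    next
      case True
      have gx: "g x z = ennreal (1 / (q + z)) * (ennreal (x powr (p + z - 1)) * indicator {0<..1} x)" for x
      proof -
        have "x powr (p + z - 1) / (q + z) = (1 / (q + z)) * x powr (p + z - 1)" by simp
        then show ?thesis unfolding g_def using True q
          by (simp add: ennreal_mult mult.assoc del: times_divide_eq_left divide_le_0_1_iff)
      qed
      have "(\<integral>\<^sup>+x. g x z \<partial>lborel) = ennreal (1 / (q + z)) * (\<integral>\<^sup>+x. ennreal (x powr (p + z - 1)) * indicator {0<..1} x \<partial>lborel)"
        unfolding gx by (rule nn_integral_cmult) measurable
      also have "\<dots> = ennreal (1 / (q + z)) * ennreal (1 / (p + z))"
        using int_powr01[of "p + z"] p True by (simp add: diff_add_eq)
      also have "\<dots> = ennreal (1 / ((p + z) * (q + z)))"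
        using p q True by (simp add: ennreal_mult[symmetric] mult.commute)
      finally show ?thesis using True by simp
    qed
  qed
  also have "\<dots> = ennreal (Kf p q)" by (rule int_rat[OF p q])
  finally show ?thesis .
qed

lemma J_has:
  fixes p q :: real assumes p: "p > 0" and q: "q > 0"
  shows "has_bochner_integral lborel (J p q) (Kf p q)"
  by (rule has_bochner_integral_nn_integral) (use J_nonneg Kf_nonneg[OF p q] J_nn[OF p q] in auto)



lemma ln_fact_sum: "ln (fact n :: real) = (\<Sum>k=1..n. ln (real k))"
proof -
  have "(fact n :: real) = (\<Prod>k=1..n. real k)" by (simp add: fact_prod)
  then show ?thesis by (simp only:) (subst ln_prod, auto)
qed

lemma lGs_sum:
  fixes x :: real assumes x: "x > 0"
  shows "(\<Sum>k<Suc n. ln (x + real k)) = x * ln (real n) + ln (fact n) - ln_Gamma_series x n"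
proof -
  have "(\<Sum>k=1..n. ln (x / real k + 1)) = (\<Sum>k=1..n. ln (x + real k) - ln (real k))"
  proof (rule sum.cong)
    fix k assume "k \<in> {1..n}"
    then have k: "real k > 0" by auto
    have "x / real k + 1 = (x + real k) / real k" using k by (simp add: field_simps)
    then show "ln (x / real k + 1) = ln (x + real k) - ln (real k)"
      using k x by (simp add: ln_div)
  qed simp
  also have "\<dots> = (\<Sum>k=1..n. ln (x + real k)) - ln (fact n)"
    by (simp add: sum_subtractf ln_fact_sum)
  finally have 1: "(\<Sum>k=1..n. ln (x / real k + 1)) = (\<Sum>k=1..n. ln (x + real k)) - ln (fact n)" .
  have 2: "(\<Sum>k<Suc n. ln (x + real k)) = ln x + (\<Sum>k=1..n. ln (x + real k))"
    by (induction n) (simp_all add: sum.cl_ivl_Suc)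
  show ?thesis unfolding ln_Gamma_series_def using 1 2 by simp
qed

lemma gamma_part:
  fixes a b c d :: real
  assumes b: "b > 0" and ab: "a + b > 0" and cb: "c + b > 0" and db: "d + b > 0" and ac: "a \<noteq> c"
  shows "(\<lambda>n::nat. 1 / (b * real (Suc n) + d) - ln (1 + (c - a) / (b * real (Suc n) + a)) / (c - a))
     sums (ln (Gamma ((b + c) / b) / Gamma ((a + b) / b)) / (c - a) - Digamma ((b + d) / b) / b)"
proof -
  define A where "A = 1 + a / b"
  define C where "C = 1 + c / b"
  define D where "D = 1 + d / b"
  have A: "A > 0" unfolding A_def using b ab by (simp add: field_simps)
  have C: "C > 0" unfolding C_def using b cb by (simp add: field_simps)
  have D: "D > 0" unfolding D_def using b db by (simp add: field_simps)
  have eA: "(a + b) / b = A" and eC: "(b + c) / b = C" and eD: "(b + d) / b = D"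
    unfolding A_def C_def D_def using b by (simp_all add: field_simps)
  have CA: "(C - A) / (c - a) = 1 / b" unfolding A_def C_def using b ac
    by (simp add: field_simps)
  have trm: "1 / (b * real (Suc m) + d) - ln (1 + (c - a) / (b * real (Suc m) + a)) / (c - a)
      = (1/b) * inverse (D + real m) - (ln (C + real m) - ln (A + real m)) / (c - a)" for m
  proof -
    have p1: "b * real (Suc m) + d = b * (D + real m)" unfolding D_def using b by (simp add: field_simps)
    have p2: "b * real (Suc m) + a = b * (A + real m)" unfolding A_def using b by (simp add: field_simps)
    have p3: "b * real (Suc m) + c = b * (C + real m)" unfolding C_def using b by (simp add: field_simps)
    have "1 + (c - a) / (b * real (Suc m) + a) = (b * real (Suc m) + c) / (b * real (Suc m) + a)"
    proof -
      have "b * (A + real m) > 0" using A b by (simp add: add_pos_nonneg)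
      then have "b * real (Suc m) + a \<noteq> 0" by (simp only: p2)
      then show ?thesis by (simp add: field_simps)
    qed
    also have "\<dots> = (C + real m) / (A + real m)" using p2 p3 b by simp
    finally have "ln (1 + (c - a) / (b * real (Suc m) + a)) = ln (C + real m) - ln (A + real m)"
      using A C by (simp add: ln_div add_pos_nonneg)
    moreover have "1 / (b * real (Suc m) + d) = (1/b) * inverse (D + real m)"
      unfolding p1 by (simp add: field_simps)
    ultimately show ?thesis by simp
  qed
  define Dg where "Dg = (\<lambda>m. ln (real m) - (\<Sum>n<m. inverse (D + real n)))"
  have Dg: "Dg \<longlonglongrightarrow> Digamma D" unfolding Dg_def using Digamma_LIMSEQ[of D] D by simp
  define G where "G = (\<lambda>n. ln_Gamma_series C n - ln_Gamma_series A n)"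
  have G: "G \<longlonglongrightarrow> ln_Gamma C - ln_Gamma A" unfolding G_def
    by (intro tendsto_diff ln_Gamma_real_LIMSEQ A C)
  have L: "(\<lambda>n::nat. ln (real (Suc n)) - ln (real n)) \<longlonglongrightarrow> 0" by real_asymp
  have ps: "(\<Sum>m<Suc n. 1 / (b * real (Suc m) + d) - ln (1 + (c - a) / (b * real (Suc m) + a)) / (c - a))
      = (1/b) * (ln (real (Suc n)) - ln (real n)) - Dg (Suc n) / b + G n / (c - a)" for n
  proof -
    have "(\<Sum>m<Suc n. 1 / (b * real (Suc m) + d) - ln (1 + (c - a) / (b * real (Suc m) + a)) / (c - a))
       = (1/b) * (\<Sum>m<Suc n. inverse (D + real m)) - ((\<Sum>m<Suc n. ln (C + real m)) - (\<Sum>m<Suc n. ln (A + real m))) / (c - a)"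
      by (simp only: trm sum_subtractf sum_distrib_left sum_divide_distrib[symmetric])
    also have "\<dots> = (1/b) * (ln (real (Suc n)) - Dg (Suc n)) - ((C - A) * ln (real n) - G n) / (c - a)"
      unfolding Dg_def G_def lGs_sum[OF A] lGs_sum[OF C] by (simp add: algebra_simps)
    also have "\<dots> = (1/b) * (ln (real (Suc n)) - Dg (Suc n)) - ((C - A) / (c - a)) * ln (real n) + G n / (c - a)"
      by (simp add: diff_divide_distrib add_divide_distrib algebra_simps)
    also have "\<dots> = (1/b) * (ln (real (Suc n)) - ln (real n)) - Dg (Suc n) / b + G n / (c - a)"
      unfolding CA by (simp add: algebra_simps)
    finally show ?thesis .
  qed
  have "(\<lambda>n. (1/b) * (ln (real (Suc n)) - ln (real n)) - Dg (Suc n) / b + G n / (c - a))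
     \<longlonglongrightarrow> (1/b) * 0 - Digamma D / b + (ln_Gamma C - ln_Gamma A) / (c - a)"
    by (intro tendsto_intros L G LIMSEQ_Suc[OF Dg]) (use ac b in auto)
  moreover have "ln_Gamma C - ln_Gamma A = ln (Gamma C / Gamma A)"
  proof -
    have gA: "Gamma A > 0" "Gamma C > 0" using Gamma_real_pos A C by auto
    have "Gamma C \<noteq> 0" "Gamma A \<noteq> 0" using gA by linarith+
    then show ?thesis by (simp add: ln_div ln_Gamma_real_pos A C)
  qed
  ultimately have "(\<lambda>n. \<Sum>m<Suc n. 1 / (b * real (Suc m) + d) - ln (1 + (c - a) / (b * real (Suc m) + a)) / (c - a))
     \<longlonglongrightarrow> ln (Gamma C / Gamma A) / (c - a) - Digamma D / b"
    unfolding ps by simp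
  then show ?thesis unfolding sums_def eA eC eD by (rule LIMSEQ_imp_Suc)
qed



lemma pointwise:
  fixes a b c d :: real and x y :: real
  assumes b: "b > 0"
  defines "F \<equiv> \<lambda>m. J (b * real (Suc m) + d) (b * real (Suc m) + d) (x, y) - J (b * real (Suc m) + a) (b * real (Suc m) + c) (x, y)"
  shows "\<exists>u::real. 0 \<le> u \<and> u < 1 \<and> (\<forall>N. (\<Sum>m<N. F m) = (indicator ({0..1} \<times> {0..1}) (x, y) *\<^sub>R integrand36 a b c d (x, y)) * (1 - u ^ N))"
proof (cases "x \<in> {0<..1} \<and> y \<in> {0<..1} \<and> x * y < 1")
  case True
  then have x0: "x > 0" and x1: "x \<le> 1" and y0: "y > 0" and y1: "y \<le> 1" and t1: "x * y < 1" by auto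
  define t where "t = x * y"
  have t0: "t > 0" using x0 y0 by (simp add: t_def)
  have t1': "t < 1" using t1 by (simp add: t_def)
  define u where "u = t powr b"
  have u0: "u > 0" using t0 by (simp add: u_def)
  have u1: "u < 1" unfolding u_def using powr_less_mono2[of b t 1] t0 t1' b by simp
  define Q where "Q = (t powr (d - 1) - x powr (a - 1) * y powr (c - 1)) / (- ln t)"
  have Fm: "F m = u ^ Suc m * Q" for m
  proof -
    have tb: "t powr (b * real (Suc m)) = u ^ Suc m"
    proof -
      have "t powr (b * real (Suc m)) = (t powr b) powr real (Suc m)" by (simp add: powr_powr)
      also have "\<dots> = u ^ Suc m" unfolding u_def by (rule powr_realpow) (use t0 in simp)
      finally show ?thesis .
    qed
    have txy: "x powr (b * real (Suc m)) * y powr (b * real (Suc m)) = u ^ Suc m"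
      using x0 y0 tb unfolding t_def by (simp add: powr_mult)
    have tdd: "x powr (d - 1) * y powr (d - 1) = t powr (d - 1)"
      using x0 y0 unfolding t_def by (simp add: powr_mult)
    have e1: "x powr (b * real (Suc m) + d - 1) * y powr (b * real (Suc m) + d - 1) = u ^ Suc m * t powr (d - 1)"
    proof -
      have "x powr (b * real (Suc m) + d - 1) * y powr (b * real (Suc m) + d - 1)
          = (x powr (b * real (Suc m)) * y powr (b * real (Suc m))) * (x powr (d - 1) * y powr (d - 1))"
        by (simp add: add_diff_eq[symmetric] powr_add mult_ac)
      then show ?thesis unfolding txy tdd .
    qed
    have e2: "x powr (b * real (Suc m) + a - 1) * y powr (b * real (Suc m) + c - 1) = u ^ Suc m * (x powr (a - 1) * y powr (c - 1))"
    proof -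
      have "x powr (b * real (Suc m) + a - 1) * y powr (b * real (Suc m) + c - 1)
          = (x powr (b * real (Suc m)) * y powr (b * real (Suc m))) * (x powr (a - 1) * y powr (c - 1))"
        by (simp add: add_diff_eq[symmetric] powr_add mult_ac)
      then show ?thesis unfolding txy .
    qed
    show ?thesis unfolding F_def J_def using True e1 e2
      by (simp add: Q_def t_def diff_divide_distrib right_diff_distrib)
  qed
  have integ: "indicator ({0..1} \<times> {0..1}) (x, y) *\<^sub>R integrand36 a b c d (x, y) = Q * (u / (1 - u))"
  proof -
    have "(x, y) \<in> {0..1} \<times> {0..1}" using True by auto
    moreover have "integrand36 a b c d (x, y) = Q * (u / (1 - u))"
    proof -
      have "integrand36 a b c d (x, y) = u * (t powr (d - 1) - x powr (a - 1) * y powr (c - 1)) / (- (1 - u) * ln t)"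
        unfolding integrand36_def u_def t_def by simp
      moreover have "ln t \<noteq> 0" "1 - u \<noteq> 0" using t0 t1' u1 by auto
      ultimately show ?thesis unfolding Q_def by (simp add: field_simps)
    qed
    ultimately show ?thesis by simp
  qed
  show ?thesis
  proof (intro exI conjI allI)
    show "0 \<le> u" "u < 1" using u0 u1 by auto
    fix N
    have "(\<Sum>m<N. F m) = Q * (u * (\<Sum>m<N. u ^ m))"
      by (simp add: Fm sum_distrib_left sum_distrib_right mult_ac)
    also have "\<dots> = Q * (u * ((1 - u ^ N) / (1 - u)))"
      using u1 by (simp add: sum_gp_strict)
    finally show "(\<Sum>m<N. F m) = (indicator ({0..1} \<times> {0..1}) (x, y) *\<^sub>R integrand36 a b c d (x, y)) * (1 - u ^ N)"
      unfolding integ by simp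
  qed
next
  case False
  have F0: "F m = 0" for m
  proof (cases "x \<in> {0<..1} \<and> y \<in> {0<..1}")
    case True
    then have "x * y \<le> 1" by (auto intro: mult_le_one)
    then have "x * y = 1" using False True by simp
    then show ?thesis unfolding F_def J_def by simp
  next
    case False
    then show ?thesis unfolding F_def J_def by auto
  qed
  have I0: "indicator ({0..1} \<times> {0..1}) (x, y) *\<^sub>R integrand36 a b c d (x, y) = 0"
  proof (cases "(x, y) \<in> {0..1} \<times> {0..1}")
    case True
    then consider "x = 0" | "y = 0" | "x = 1 \<and> y = 1" using False
    proof -
      have r: "0 \<le> x" "x \<le> 1" "0 \<le> y" "y \<le> 1" using True by auto
      show "thesis" if h1: "x = 0 \<Longrightarrow> thesis" and h2: "y = 0 \<Longrightarrow> thesis" and h3: "x = 1 \<and> y = 1 \<Longrightarrow> thesis"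
      proof (cases "x = 0 \<or> y = 0")
        case True then show ?thesis using h1 h2 by blast
      next
        case nz: False
        then have xy: "x > 0" "y > 0" using r by auto
        then have "\<not> x * y < 1" using False r by auto
        moreover have "x * y < 1" if "x < 1"
        proof -
          have "x * y < 1 * y" using that xy by (intro mult_strict_right_mono) auto
          then show ?thesis using r by simp
        qed
        moreover have "x * y < 1" if "y < 1"
        proof -
          have "x * y < x * 1" using that xy by (intro mult_strict_left_mono) auto
          then show ?thesis using r by simp
        qed
        ultimately have "x = 1 \<and> y = 1" using r by force
        then show ?thesis using h3 by blast
      qed
    qed
    then show ?thesis unfolding integrand36_def by cases auto
  next
    case False
    then show ?thesis by simp
  qed
  show ?thesis unfolding I0 by (rule exI[of _ 0]) (simp add: F0)
qed

theorem theorem3p6: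
  fixes a b c d :: real
  assumes "b > 0" and "a + b > 0" and "c + b > 0" and "d + b > 0" and "a \<noteq> c"
    and "set_integrable lborel ({0..1} \<times> {0..1}) (integrand36 a b c d)"
  shows "(\<lambda>n::nat. 1 / (b * real (Suc n) + d)
            - ln (1 + (c - a) / (b * real (Suc n) + a)) / (c - a))
         sums (LINT p:{0..1} \<times> {0..1}|lborel. integrand36 a b c d p)
       \<and> (LINT p:{0..1} \<times> {0..1}|lborel. integrand36 a b c d p)
         = ln (Gamma ((b + c) / b) / Gamma ((a + b) / b)) / (c - a) - Digamma ((b + d) / b) / b"
proof -
  note b = assms(1) and ac = assms(5)
  define f where "f = (\<lambda>w. indicator ({0..1} \<times> {0..1}) w *\<^sub>R integrand36 a b c d w)"
  have fi: "integrable lborel f" using assms(6) unfolding set_integrable_def f_def .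
  have LI: "(LINT p:{0..1} \<times> {0..1}|lborel. integrand36 a b c d p) = integral\<^sup>L lborel f"
    unfolding set_lebesgue_integral_def f_def ..
  define trm where "trm = (\<lambda>n::nat. 1 / (b * real (Suc n) + d)
            - ln (1 + (c - a) / (b * real (Suc n) + a)) / (c - a))"
  define F where "F = (\<lambda>m w. J (b * real (Suc m) + d) (b * real (Suc m) + d) w - J (b * real (Suc m) + a) (b * real (Suc m) + c) w)"
  have Fint: "has_bochner_integral lborel (F m) (trm m)" for m
  proof -
    have bm: "b * real (Suc m) \<ge> b" using b by simp
    have P: "b * real (Suc m) + d > 0" and A: "b * real (Suc m) + a > 0" and C: "b * real (Suc m) + c > 0"
      using bm assms(2-4) by linarith+
    have "has_bochner_integral lborel (F m)
       (Kf (b * real (Suc m) + d) (b * real (Suc m) + d) - Kf (b * real (Suc m) + a) (b * real (Suc m) + c))"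
      unfolding F_def by (intro has_bochner_integral_diff J_has P A C)
    moreover have "Kf (b * real (Suc m) + d) (b * real (Suc m) + d) - Kf (b * real (Suc m) + a) (b * real (Suc m) + c) = trm m"
    proof -
      have ne: "b * real (Suc m) + a \<noteq> b * real (Suc m) + c" using ac by simp
      have "1 + (c - a) / (b * real (Suc m) + a) = (b * real (Suc m) + c) / (b * real (Suc m) + a)"
        using A by (simp add: field_simps)
      then show ?thesis unfolding Kf_def trm_def using ne by simp
    qed
    ultimately show ?thesis by simp
  qed
  define G where "G = (\<lambda>N w. \<Sum>m<N. F m w)"
  have Gint: "has_bochner_integral lborel (G N) (\<Sum>m<N. trm m)" for N
    unfolding G_def by (rule has_bochner_integral_sum) (use Fint in auto)
  have pw: "\<exists>u::real. 0 \<le> u \<and> u < 1 \<and> (\<forall>N. G N w = f w * (1 - u ^ N))" for w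
  proof -
    obtain x y where w: "w = (x, y)" by fastforce
    show ?thesis unfolding w G_def F_def f_def using pointwise[OF b, of d x y a c] by simp
  qed
  have lim: "(\<lambda>N. integral\<^sup>L lborel (G N)) \<longlonglongrightarrow> integral\<^sup>L lborel f"
  proof (rule integral_dominated_convergence[where w = "\<lambda>w. norm (f w)"])
    show "f \<in> borel_measurable lborel" using fi by (rule borel_measurable_integrable)
    show "G N \<in> borel_measurable lborel" for N using Gint[of N] by (rule borel_measurable_has_bochner_integral)
    show "integrable lborel (\<lambda>w. norm (f w))" using fi by (rule integrable_norm)
    show "AE w in lborel. (\<lambda>N. G N w) \<longlonglongrightarrow> f w"
    proof (rule AE_I2)
      fix w
      obtain u :: real where u: "0 \<le> u" "u < 1" "\<And>N. G N w = f w * (1 - u ^ N)" using pw[of w] by blast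
      have "(\<lambda>N. f w * (1 - u ^ N)) \<longlonglongrightarrow> f w * (1 - 0)"
        using u by (intro tendsto_intros LIMSEQ_power_zero) auto
      then show "(\<lambda>N. G N w) \<longlonglongrightarrow> f w" using u(3) by simp
    qed
    show "AE w in lborel. norm (G N w) \<le> norm (f w)" for N
    proof (rule AE_I2)
      fix w
      obtain u :: real where u: "0 \<le> u" "u < 1" "\<And>N. G N w = f w * (1 - u ^ N)" using pw[of w] by blast
      have "0 \<le> 1 - u ^ N" "1 - u ^ N \<le> 1" using u by (auto intro: power_le_one)
      then have "\<bar>f w\<bar> * \<bar>1 - u ^ N\<bar> \<le> \<bar>f w\<bar> * 1" by (intro mult_left_mono) auto
      then show "norm (G N w) \<le> norm (f w)" using u(3) by (simp add: abs_mult)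
    qed
  qed
  have S: "trm sums (integral\<^sup>L lborel f)"
  proof -
    have "integral\<^sup>L lborel (G N) = (\<Sum>m<N. trm m)" for N
      using Gint[of N] by (rule has_bochner_integral_integral_eq)
    then show ?thesis unfolding sums_def using lim by simp
  qed
  have S2: "trm sums (ln (Gamma ((b + c) / b) / Gamma ((a + b) / b)) / (c - a) - Digamma ((b + d) / b) / b)"
    unfolding trm_def by (rule gamma_part[OF assms(1-5)])
  show ?thesis using S S2 sums_unique2 unfolding LI trm_def by blast
qed


end
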